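(* Let $p\geq 1$ be an integer and let $G=\langle a,t\mid ta^pt^{-1}=a^p\rangle$ be the Baumslag--Solitar group $BS(p,p)$. Every element $x\in G$ can be written uniquely as $x=w(a,t)a^N$, where $N\in\mathbb Z$ and $w(a,t)$ is a freely reduced word belonging to $\{t,at,\ldots,a^{p-1}t,\,t^{-1},at^{-1},\ldots,a^{p-1}t^{-1}\}^*$. There exists a constant $C_1>0$ such that for every $x\in G$ with this normal form $x=w(a,t)a^N$, $$C_1(|w|+|N|)\leq \|x\|\leq |w|+|N|,$$ where $|w|$ is the number of letters of $w$ as a word over $\{a^{\pm1},t^{\pm1}\}$ and $\|x\|$ is the word length of $x$ with respect to the generating set $\{a,t\}$.
   Context: $X^*$ denotes the set of finite concatenations of words from $X$. *)

theory Defs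
  imports Complex_Main
begin

text \<open>Generators of BS(p,p) = < a, t | t a^p t^-1 = a^p >.
  A letter is a generator together with a flag: False = the generator, True = its inverse.\<close>

datatype gen = GA | GT

type_synonym letter = "gen \<times> bool"

definition inv_letter :: "letter \<Rightarrow> letter" where
  "inv_letter x = (fst x, \<not> snd x)"

definition a_pow :: "int \<Rightarrow> letter list" where
  "a_pow N = (if N \<ge> 0 then replicate (nat N) (GA, False) else replicate (nat (- N)) (GA, True))"

definition relator :: "nat \<Rightarrow> letter list" where
  "relator p = [(GT, False)] @ a_pow (int p) @ [(GT, True)] @ a_pow (- int p)"

inductive bs_eq :: "nat \<Rightarrow> letter list \<Rightarrow> letter list \<Rightarrow> bool" for p where
  bs_refl: "bs_eq p u u"
| bs_sym: "bs_eq p u v \<Longrightarrow> bs_eq p v u"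
| bs_trans: "bs_eq p u v \<Longrightarrow> bs_eq p v w \<Longrightarrow> bs_eq p u w"
| bs_free: "bs_eq p (u @ [x, inv_letter x] @ v) (u @ v)"
| bs_rel: "bs_eq p (u @ relator p @ v) (u @ v)"

definition word_length :: "nat \<Rightarrow> letter list \<Rightarrow> nat" where
  "word_length p u = (LEAST n. \<exists>v. length v = n \<and> bs_eq p u v)"

definition freely_reduced :: "letter list \<Rightarrow> bool" where
  "freely_reduced xs \<longleftrightarrow> (\<forall>i. Suc i < length xs \<longrightarrow> xs ! Suc i \<noteq> inv_letter (xs ! i))"

text \<open>A word in the blocks a^i t^e (0 \<le> i \<le> p-1, e = \<plusminus>1): a block (i, s) stands for
  a^i t if s = False and a^i t^-1 if s = True.\<close>
definition block_word :: "(nat \<times> bool) list \<Rightarrow> letter list" where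
  "block_word w = concat (map (\<lambda>(i, s). replicate i (GA, False) @ [(GT, s)]) w)"

definition normal_word :: "nat \<Rightarrow> (nat \<times> bool) list \<Rightarrow> bool" where
  "normal_word p w \<longleftrightarrow> (\<forall>(i, s) \<in> set w. i < p) \<and> freely_reduced (block_word w)"

end

theory Submission
  imports Defs
begin


lemma bs_ctx: "bs_eq p u v \<Longrightarrow> xs = x @ u @ y \<Longrightarrow> ys = x @ v @ y \<Longrightarrow> bs_eq p xs ys"
proof (induction arbitrary: xs ys rule: bs_eq.induct)
  case (bs_refl u) then show ?case by (simp add: bs_eq.bs_refl)
next
  case (bs_sym u v) then show ?case by (meson bs_eq.bs_sym)
next
  case (bs_trans u v w) then show ?case by (meson bs_eq.bs_trans)
next
  case (bs_free u c v) then show ?case using bs_eq.bs_free[of p "x @ u" c "v @ y"] by simp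
next
  case (bs_rel u v) then show ?case using bs_eq.bs_rel[of p "x @ u" "v @ y"] by simp
qed

declare bs_trans[trans]

lemma bs_sym': "bs_eq p u v \<Longrightarrow> bs_eq p v u" by (rule bs_sym)

abbreviation "A \<equiv> (GA, False)"
abbreviation "Ai \<equiv> (GA, True)"

lemma a_pow_0[simp]: "a_pow 0 = []" by (simp add: a_pow_def)
lemma a_pow_nat: "a_pow (int n) = replicate n A" by (simp add: a_pow_def)
lemma a_pow_neg: "a_pow (- int n) = replicate n Ai" by (simp add: a_pow_def)
lemma length_a_pow[simp]: "length (a_pow N) = nat \<bar>N\<bar>" by (simp add: a_pow_def)

lemma a_pow_succ: "bs_eq p (a_pow N @ [A]) (a_pow (N+1))"
proof (cases "N \<ge> 0")
  case True
  then have "a_pow N @ [A] = a_pow (N+1)"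
    by (simp add: a_pow_def nat_add_distrib replicate_append_same)
  then show ?thesis by (simp add: bs_refl)
next
  case False
  define k where "k = nat (- N) - 1"
  have N: "N = - int (Suc k)" using False k_def by simp
  have "a_pow N = replicate k Ai @ [Ai]" unfolding N a_pow_neg
    by (simp add: replicate_append_same)
  moreover have "a_pow (N+1) = replicate k Ai" unfolding N
    using a_pow_neg[of k] by simp
  ultimately show ?thesis
    using bs_free[of p "replicate k Ai" Ai "[]"] by (simp add: inv_letter_def)
qed

lemma a_pow_pred: "bs_eq p (a_pow N @ [Ai]) (a_pow (N-1))"
proof (cases "N \<le> 0")
  case True
  define k where "k = nat (- N)"
  have N: "N = - int k" using True k_def by simp
  have e: "N - 1 = - int (Suc k)" using N by simp
  have 1: "a_pow (N-1) = replicate (Suc k) Ai" by (simp only: e a_pow_neg)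
  have 2: "a_pow N = replicate k Ai" by (simp only: N a_pow_neg)
  have "a_pow N @ [Ai] = a_pow (N-1)" unfolding 1 2
    by (simp add: replicate_append_same)
  then show ?thesis by (simp add: bs_refl)
next
  case False
  define k where "k = nat N - 1"
  have N: "N = int (Suc k)" using False k_def by simp
  have "a_pow N = replicate k A @ [A]" unfolding N a_pow_nat
    by (simp add: replicate_append_same)
  moreover have "a_pow (N-1) = replicate k A" unfolding N
    using a_pow_nat[of k] by simp
  ultimately show ?thesis
    using bs_free[of p "replicate k A" A "[]"] by (simp add: inv_letter_def)
qed

lemma a_pow_add: "bs_eq p (a_pow M @ a_pow N) (a_pow (M+N))"
proof (induction N rule: int_induct[where k=0])
  case base then show ?case by (simp add: bs_refl)
next
  case (step1 N)
  have "bs_eq p (a_pow M @ a_pow (N+1)) (a_pow M @ a_pow N @ [A])"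
    by (rule bs_ctx[OF bs_sym'[OF a_pow_succ], where x="a_pow M" and y="[]"]) simp_all
  also have "bs_eq p \<dots> (a_pow (M+N) @ [A])"
    by (rule bs_ctx[OF step1(2)[of], where x="[]" and y="[A]"]) simp_all
  also have "bs_eq p \<dots> (a_pow (M+N+1))" by (rule a_pow_succ)
  finally show ?case by (simp add: add.assoc)
next
  case (step2 N)
  have "bs_eq p (a_pow M @ a_pow (N-1)) (a_pow M @ a_pow N @ [Ai])"
    by (rule bs_ctx[OF bs_sym'[OF a_pow_pred], where x="a_pow M" and y="[]"]) simp_all
  also have "bs_eq p \<dots> (a_pow (M+N) @ [Ai])"
    by (rule bs_ctx[OF step2(2)[of], where x="[]" and y="[Ai]"]) simp_all
  also have "bs_eq p \<dots> (a_pow (M+N-1))" by (rule a_pow_pred)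
  finally show ?case by (simp add: algebra_simps)
qed

lemma cancel2: "bs_eq p (x @ [c, inv_letter c] @ y) (x @ y)" by (rule bs_free)
lemma inv_inv[simp]: "inv_letter (inv_letter c) = c" by (simp add: inv_letter_def)
lemma cancel2': "bs_eq p (x @ [inv_letter c, c] @ y) (x @ y)"
  using bs_free[of p x "inv_letter c" y] by simp

lemma PM: "bs_eq p (x @ a_pow (- int p) @ a_pow (int p) @ y) (x @ y)"
  by (rule bs_ctx[OF a_pow_add[of p "- int p" "int p"], where x=x and y=y]) simp_all
lemma MP: "bs_eq p (x @ a_pow (int p) @ a_pow (- int p) @ y) (x @ y)"
  by (rule bs_ctx[OF a_pow_add[of p "int p" "- int p"], where x=x and y=y]) simp_all

lemma comm_tF: "bs_eq p (a_pow (int p) @ [(GT,False)]) ([(GT,False)] @ a_pow (int p))"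
proof -
  let ?P = "a_pow (int p)" and ?M = "a_pow (- int p)"
  have "bs_eq p ([(GT,False)] @ ?P) ([(GT,False)] @ ?P @ [(GT,True), (GT,False)])"
    using bs_sym'[OF cancel2'[of p "[(GT,False)] @ ?P" "(GT,False)" "[]"]] by (simp add: inv_letter_def)
  also have "bs_eq p \<dots> (([(GT,False)] @ ?P @ [(GT,True)] @ ?M) @ ?P @ [(GT,False)])"
    using bs_sym'[OF PM[of p "[(GT,False)] @ ?P @ [(GT,True)]" "[(GT,False)]"]] by simp
  also have "bs_eq p \<dots> (?P @ [(GT,False)])"
    using bs_rel[of p "[]" "?P @ [(GT,False)]"] by (simp add: relator_def)
  finally have "bs_eq p ([(GT,False)] @ ?P) (?P @ [(GT,False)])" .
  then show ?thesis by (rule bs_sym)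
qed

lemma comm_tT: "bs_eq p (a_pow (int p) @ [(GT,True)]) ([(GT,True)] @ a_pow (int p))"
proof -
  let ?P = "a_pow (int p)"
  have "bs_eq p (?P @ [(GT,True)]) ([(GT,True), (GT,False)] @ ?P @ [(GT,True)])"
    using bs_sym'[OF cancel2'[of p "[]" "(GT,False)" "?P @ [(GT,True)]"]] by (simp add: inv_letter_def)
  also have "bs_eq p \<dots> ([(GT,True)] @ ?P @ [(GT,False), (GT,True)])"
    by (rule bs_ctx[OF bs_sym'[OF comm_tF[of p]], where x="[(GT,True)]" and y="[(GT,True)]"]) simp_all
  also have "bs_eq p \<dots> ([(GT,True)] @ ?P)"
    using cancel2[of p "[(GT,True)] @ ?P" "(GT,False)" "[]"] by (simp add: inv_letter_def)
  finally show ?thesis .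
qed

lemma comm_t: "bs_eq p (a_pow (int p) @ [(GT,e)]) ([(GT,e)] @ a_pow (int p))"
  using comm_tF comm_tT by (cases e) auto

lemma comm_tm: "bs_eq p (a_pow (- int p) @ [(GT,e)]) ([(GT,e)] @ a_pow (- int p))"
proof -
  let ?P = "a_pow (int p)" and ?M = "a_pow (- int p)"
  have "bs_eq p (?M @ [(GT,e)]) (?M @ [(GT,e)] @ ?P @ ?M)"
    using bs_sym'[OF MP[of p "?M @ [(GT,e)]" "[]"]] by simp
  also have "bs_eq p \<dots> (?M @ ?P @ [(GT,e)] @ ?M)"
    by (rule bs_ctx[OF bs_sym'[OF comm_t[of p e]], where x="?M" and y="?M"]) simp_all
  also have "bs_eq p \<dots> ([(GT,e)] @ ?M)"
    using PM[of p "[]" "[(GT,e)] @ ?M"] by simp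
  finally show ?thesis .
qed

lemma comm_q: "bs_eq p (a_pow (q * int p) @ [(GT,e)]) ([(GT,e)] @ a_pow (q * int p))"
proof (induction q rule: int_induct[where k=0])
  case base then show ?case by (simp add: bs_refl)
next
  case (step1 q)
  let ?Q = "a_pow (q * int p)" and ?P = "a_pow (int p)"
  have "bs_eq p (a_pow ((q+1) * int p) @ [(GT,e)]) (?Q @ ?P @ [(GT,e)])"
    by (rule bs_ctx[OF bs_sym'[OF a_pow_add[of p "q * int p" "int p"]], where x="[]" and y="[(GT,e)]"]) (simp_all add: algebra_simps)
  also have "bs_eq p \<dots> (?Q @ [(GT,e)] @ ?P)"
    by (rule bs_ctx[OF comm_t[of p e], where x="?Q" and y="[]"]) simp_all
  also have "bs_eq p \<dots> ([(GT,e)] @ ?Q @ ?P)"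
    by (rule bs_ctx[OF step1(2)[of], where x="[]" and y="?P"]) simp_all
  also have "bs_eq p \<dots> ([(GT,e)] @ a_pow ((q+1) * int p))"
    by (rule bs_ctx[OF a_pow_add[of p "q * int p" "int p"], where x="[(GT,e)]" and y="[]"]) (simp_all add: algebra_simps)
  finally show ?case .
next
  case (step2 q)
  let ?Q = "a_pow (q * int p)" and ?M = "a_pow (- int p)"
  have "bs_eq p (a_pow ((q-1) * int p) @ [(GT,e)]) (?Q @ ?M @ [(GT,e)])"
    by (rule bs_ctx[OF bs_sym'[OF a_pow_add[of p "q * int p" "- int p"]], where x="[]" and y="[(GT,e)]"]) (simp_all add: algebra_simps)
  also have "bs_eq p \<dots> (?Q @ [(GT,e)] @ ?M)"
    by (rule bs_ctx[OF comm_tm[of p e], where x="?Q" and y="[]"]) simp_all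
  also have "bs_eq p \<dots> ([(GT,e)] @ ?Q @ ?M)"
    by (rule bs_ctx[OF step2(2)[of], where x="[]" and y="?M"]) simp_all
  also have "bs_eq p \<dots> ([(GT,e)] @ a_pow ((q-1) * int p))"
    by (rule bs_ctx[OF a_pow_add[of p "q * int p" "- int p"], where x="[(GT,e)]" and y="[]"]) (simp_all add: algebra_simps)
  finally show ?case .
qed


fun good :: "nat \<Rightarrow> (nat \<times> bool) list \<Rightarrow> bool" where
  "good p [] = True"
| "good p [b] = (fst b < p)"
| "good p (b1 # b2 # bs) = (fst b1 < p \<and> \<not> (fst b2 = 0 \<and> snd b2 = (\<not> snd b1)) \<and> good p (b2 # bs))"

lemma good_snoc: "good p (w @ [b]) \<longleftrightarrow> good p w \<and> fst b < p \<and> (w \<noteq> [] \<longrightarrow> \<not> (fst b = 0 \<and> snd b = (\<not> snd (last w))))"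
proof (induction w)
  case Nil then show ?case by simp
next
  case (Cons c w) then show ?case by (cases w) auto
qed

lemma good_prefix: "good p (w @ u) \<Longrightarrow> good p w"
proof (induction u arbitrary: w rule: rev_induct)
  case Nil then show ?case by simp
next
  case (snoc x xs) then show ?case using good_snoc[of p "w @ xs" x] by simp
qed

lemma good_butlast: "good p w \<Longrightarrow> w \<noteq> [] \<Longrightarrow> good p (butlast w) \<and> fst (last w) < p \<and> (butlast w \<noteq> [] \<longrightarrow> \<not> (fst (last w) = 0 \<and> snd (last w) = (\<not> snd (last (butlast w)))))"
  using good_snoc[of p "butlast w" "last w"] by simp

lemma bw_Nil[simp]: "block_word [] = []" by (simp add: block_word_def)
lemma bw_Cons[simp]: "block_word ((i,s) # w) = replicate i A @ (GT, s) # block_word w"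
  by (simp add: block_word_def)
lemma bw_snoc[simp]: "block_word (w @ [(i,s)]) = block_word w @ replicate i A @ [(GT, s)]"
  by (simp add: block_word_def)
lemma bw_append: "block_word (w @ u) = block_word w @ block_word u"
  by (simp add: block_word_def)

fun step :: "nat \<Rightarrow> (nat \<times> bool) list \<times> int \<Rightarrow> letter \<Rightarrow> (nat \<times> bool) list \<times> int" where
  "step p (w, N) (GA, b) = (w, if b then N - 1 else N + 1)"
| "step p (w, N) (GT, e) = (if N mod int p = 0 \<and> w \<noteq> [] \<and> snd (last w) = (\<not> e)
      then (butlast w, int (fst (last w)) + N)
      else (w @ [(nat (N mod int p), e)], (N div int p) * int p))"

definition rep :: "(nat \<times> bool) list \<times> int \<Rightarrow> letter list" where
  "rep S = block_word (fst S) @ a_pow (snd S)"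

definition nf :: "nat \<Rightarrow> letter list \<Rightarrow> (nat \<times> bool) list \<times> int" where
  "nf p x = foldl (step p) ([], 0) x"

lemma rep_step: "p \<ge> 1 \<Longrightarrow> bs_eq p (rep S @ [l]) (rep (step p S l))"
proof -
  assume p: "p \<ge> 1"
  obtain w N where S: "S = (w, N)" by (cases S)
  obtain g b where l: "l = (g, b)" by (cases l)
  show ?thesis
  proof (cases g)
    case GA
    show ?thesis
    proof (cases b)
      case True
      show ?thesis
        by (rule bs_ctx[OF a_pow_pred[of p N], where x="block_word w" and y="[]"]) (simp_all add: S l GA True rep_def)
    next
      case False
      show ?thesis
        by (rule bs_ctx[OF a_pow_succ[of p N], where x="block_word w" and y="[]"]) (simp_all add: S l GA False rep_def)
    qed
  next
    case GT
    define r where "r = N mod int p"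
    define q where "q = N div int p"
    have Nqr: "N = r + q * int p" unfolding r_def q_def by simp
    have r0: "r \<ge> 0" using p unfolding r_def by simp
    show ?thesis
    proof (cases "r = 0 \<and> w \<noteq> [] \<and> snd (last w) = (\<not> b)")
      case True
      define w' where "w' = butlast w"
      define j where "j = fst (last w)"
      have lw: "last w = (j, \<not> b)" using True unfolding j_def by (cases "last w") auto
      have w: "w = w' @ [(j, \<not> b)]" using True unfolding w'_def lw[symmetric] by simp
      have st: "step p S l = (w', int j + N)" using True S l GT unfolding r_def w'_def j_def by simp
      have N: "N = q * int p" using Nqr True by simp
      have "bs_eq p (rep S @ [l]) (block_word w' @ replicate j A @ [(GT, \<not> b)] @ a_pow (q * int p) @ [(GT,b)])"
        using S l GT w N by (simp add: rep_def bs_refl)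
      also have "bs_eq p \<dots> (block_word w' @ replicate j A @ [(GT, \<not> b)] @ [(GT,b)] @ a_pow (q * int p))"
        by (rule bs_ctx[OF comm_q[of p q b], where x="block_word w' @ replicate j A @ [(GT, \<not> b)]" and y="[]"]) simp_all
      also have "bs_eq p \<dots> ((block_word w' @ a_pow (int j)) @ a_pow (q * int p))"
        using cancel2[of p "block_word w' @ replicate j A" "(GT, \<not> b)" "a_pow (q * int p)"]
        by (simp add: inv_letter_def a_pow_nat)
      also have "bs_eq p \<dots> (block_word w' @ a_pow (int j + N))"
        by (rule bs_ctx[OF a_pow_add[of p "int j" "q * int p"], where x="block_word w'" and y="[]"]) (simp_all add: N)
      finally show ?thesis using st by (simp add: rep_def)
    next
      case False
      have st: "step p S l = (w @ [(nat r, b)], q * int p)" using False S l GT unfolding r_def q_def by auto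
      have "bs_eq p (rep S @ [l]) (block_word w @ a_pow N @ [(GT,b)])"
        using S l GT by (simp add: rep_def bs_refl)
      also have "bs_eq p \<dots> (block_word w @ a_pow r @ a_pow (q * int p) @ [(GT,b)])"
        by (rule bs_ctx[OF bs_sym'[OF a_pow_add[of p r "q * int p"]], where x="block_word w" and y="[(GT,b)]"]) (simp_all add: Nqr)
      also have "bs_eq p \<dots> (block_word w @ a_pow r @ [(GT,b)] @ a_pow (q * int p))"
        by (rule bs_ctx[OF comm_q[of p q b], where x="block_word w @ a_pow r" and y="[]"]) simp_all
      also have "block_word w @ a_pow r @ [(GT,b)] @ a_pow (q * int p) = rep (step p S l)"
        using st r0 a_pow_nat[of "nat r"] by (simp add: rep_def)
      finally show ?thesis .
    qed
  qed
qed

lemma nf_rep: "p \<ge> 1 \<Longrightarrow> bs_eq p x (rep (nf p x))"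
proof (induction x rule: rev_induct)
  case Nil then show ?case by (simp add: nf_def rep_def bs_refl)
next
  case (snoc l x)
  have "bs_eq p (x @ [l]) (rep (nf p x) @ [l])"
    by (rule bs_ctx[OF snoc(1)[OF snoc(2)], where x="[]" and y="[l]"]) simp_all
  also have "bs_eq p \<dots> (rep (nf p (x @ [l])))"
    using rep_step[OF snoc(2)] by (simp add: nf_def)
  finally show ?case .
qed



lemma modp: "p \<ge> 1 \<Longrightarrow> j < p \<Longrightarrow> (int j + q * int p) mod int p = int j"
  by simp
lemma divp: "p \<ge> 1 \<Longrightarrow> j < p \<Longrightarrow> (int j + q * int p) div int p = q"
  by simp

lemma step_good: "good p (fst S) \<Longrightarrow> p \<ge> 1 \<Longrightarrow> good p (fst (step p S l))"
proof -
  assume g: "good p (fst S)" and p: "p \<ge> 1"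
  obtain w N where S: "S = (w, N)" by (cases S)
  obtain g b where l: "l = (g, b)" by (cases l)
  show ?thesis
  proof (cases g)
    case GA then show ?thesis using g S l by simp
  next
    case GT
    show ?thesis
    proof (cases "N mod int p = 0 \<and> w \<noteq> [] \<and> snd (last w) = (\<not> b)")
      case True
      then show ?thesis using g S l GT good_butlast[of p w] by simp
    next
      case False
      define r where "r = nat (N mod int p)"
      have r1: "r < p" using p unfolding r_def by (simp add: nat_less_iff)
      have r2: "(r = 0) = (N mod int p = 0)"
      proof -
        have "N mod int p \<ge> 0" using p by simp
        then show ?thesis unfolding r_def by auto
      qed
      have st: "step p S l = (w @ [(r, b)], N div int p * int p)" using False S l GT r_def by auto
      show ?thesis unfolding st using False r1 r2 g S good_snoc[of p w "(r, b)"]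
        by auto
    qed
  qed
qed

lemma step_inv: "good p (fst S) \<Longrightarrow> p \<ge> 1 \<Longrightarrow> step p (step p S l) (inv_letter l) = S"
proof -
  assume g: "good p (fst S)" and p: "p \<ge> 1"
  obtain w N where S: "S = (w, N)" by (cases S)
  obtain g b where l: "l = (g, b)" by (cases l)
  show ?thesis
  proof (cases g)
    case GA then show ?thesis using S l by (cases b) (simp_all add: inv_letter_def)
  next
    case GT
    define r where "r = N mod int p"
    define q where "q = N div int p"
    have Nqr: "N = r + q * int p" unfolding r_def q_def by simp
    have r0: "r \<ge> 0" "r < int p" using p unfolding r_def by simp_all
    show ?thesis
    proof (cases "r = 0 \<and> w \<noteq> [] \<and> snd (last w) = (\<not> b)")
      case True
      define w' where "w' = butlast w"
      define j where "j = fst (last w)"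
      have lw: "last w = (j, \<not> b)" using True unfolding j_def by (cases "last w") auto
      have w: "w = w' @ [(j, \<not> b)]" using True unfolding w'_def lw[symmetric] by simp
      have st: "step p S l = (w', int j + N)" using True S l GT unfolding r_def w'_def j_def by simp
      have N: "N = q * int p" using Nqr True by simp
      have gw: "good p w' \<and> j < p \<and> (w' \<noteq> [] \<longrightarrow> \<not> (j = 0 \<and> \<not> b = (\<not> snd (last w'))))"
        using g S w good_snoc[of p w' "(j, \<not> b)"] by simp
      have "step p (w', int j + N) (GT, \<not> b) = (w' @ [(j, \<not> b)], N)"
        using gw p unfolding N by (auto simp: modp divp)
      then show ?thesis using st S l GT w by (simp add: inv_letter_def)
    next
      case False
      have st: "step p S l = (w @ [(nat r, b)], q * int p)" using False S l GT unfolding r_def q_def by auto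
      have "step p (w @ [(nat r, b)], q * int p) (GT, \<not> b) = (w, int (nat r) + q * int p)"
        using p by simp
      then show ?thesis using st S l GT Nqr r0 by (simp add: inv_letter_def)
    qed
  qed
qed

lemma fold_A: "foldl (step p) (w, N) (replicate n A) = (w, N + int n)"
  by (induction n arbitrary: N) (simp_all add: algebra_simps)

lemma fold_Ai: "foldl (step p) (w, N) (replicate n Ai) = (w, N - int n)"
  by (induction n arbitrary: N) (simp_all add: algebra_simps)

lemma split_last: "w \<noteq> [] \<Longrightarrow> snd (last w) = e \<Longrightarrow> \<exists>w' j. w = w' @ [(j, e)]"
proof -
  assume a: "w \<noteq> []" "snd (last w) = e"
  obtain j b0 where l: "last w = (j, b0)" by (cases "last w")
  have "w = butlast w @ [last w]" using a by simp
  then have "w = butlast w @ [(j, e)]" using l a by simp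
  then show ?thesis by blast
qed

lemma step_rel: "good p (fst S) \<Longrightarrow> p \<ge> 1 \<Longrightarrow> foldl (step p) S (relator p) = S"
proof -
  assume g: "good p (fst S)" and p: "p \<ge> 1"
  obtain w N where S: "S = (w, N)" by (cases S)
  define r where "r = N mod int p"
  define q where "q = N div int p"
  have Nqr: "N = r + q * int p" unfolding r_def q_def by simp
  have r0: "r \<ge> 0" "r < int p" using p unfolding r_def by simp_all
  have rel: "relator p = [(GT,False)] @ replicate p A @ [(GT,True)] @ replicate p Ai"
    unfolding relator_def a_pow_nat a_pow_neg ..
  show ?thesis
  proof (cases "r = 0 \<and> w \<noteq> [] \<and> snd (last w) = True")
    case True
    obtain w' j where w: "w = w' @ [(j, True)]"
      using True split_last[of w True] by blast
    have N: "N = q * int p" using Nqr True by simp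
    have gw: "good p w' \<and> j < p \<and> (w' \<noteq> [] \<longrightarrow> \<not> (j = 0 \<and> True = (\<not> snd (last w'))))"
      using g S w good_snoc[of p w' "(j, True)"] by simp
    have s0: "step p (w, N) (GT, False) = (w', int j + N)"
      using True unfolding w r_def by simp
    have s1: "step p (w, N) (GT, False) = (w', int j + q * int p)"
      using s0 N by simp
    have eq: "int j + q * int p + int p = int j + (q+1) * int p" by (simp add: algebra_simps)
    have m: "(int j + (q+1) * int p) mod int p = int j" using modp[of p j "q+1"] gw p by simp
    have m2: "int j mod int p = int j" using gw p by simp
    have d: "(int j + (q+1) * int p) div int p = q+1" using divp[of p j "q+1"] gw p by simp
    have c: "\<not> (int j = 0 \<and> w' \<noteq> [] \<and> snd (last w') = False)" using gw by auto
    have s2: "step p (w', int j + q * int p + int p) (GT, True) = (w, (q + 1) * int p)"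
      unfolding eq w using m2 d c by auto
    show ?thesis unfolding rel S foldl_append foldl_Cons foldl_Nil s1 fold_A s2 fold_Ai
      by (simp add: N algebra_simps)
  next
    case False
    have s1: "step p (w, N) (GT, False) = (w @ [(nat r, False)], q * int p)"
      using False unfolding r_def q_def by auto
    have s2: "step p (w @ [(nat r, False)], q * int p + int p) (GT, True) = (w, r + (q + 1) * int p)"
      using p r0 by (simp add: algebra_simps)
    show ?thesis unfolding rel S foldl_append foldl_Cons foldl_Nil s1 fold_A s2 fold_Ai
      by (simp add: Nqr algebra_simps)
  qed
qed

lemma fold_good: "good p (fst S) \<Longrightarrow> p \<ge> 1 \<Longrightarrow> good p (fst (foldl (step p) S u))"
  by (induction u arbitrary: S) (simp_all add: step_good)

lemma nf_invariant: "bs_eq p u v \<Longrightarrow> p \<ge> 1 \<Longrightarrow> good p (fst S) \<Longrightarrow> foldl (step p) S u = foldl (step p) S v"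
proof (induction arbitrary: S rule: bs_eq.induct)
  case (bs_free u c v)
  have "good p (fst (foldl (step p) S u))" using fold_good bs_free by blast
  then show ?case using step_inv[OF _ bs_free(1)] by simp
next
  case (bs_rel u v)
  have "good p (fst (foldl (step p) S u))" using fold_good bs_rel by blast
  then show ?case using step_rel[OF _ bs_rel(1)] by simp
next
  case (bs_refl u) then show ?case by simp
next
  case (bs_sym u v) then show ?case by metis
next
  case (bs_trans u v w) then show ?case by metis
qed



lemma fold_bw: "good p (u @ w) \<Longrightarrow> p \<ge> 1 \<Longrightarrow> foldl (step p) (u, 0) (block_word w) = (u @ w, 0)"
proof (induction w arbitrary: u)
  case Nil then show ?case by simp
next
  case (Cons b w)
  obtain i s where b: "b = (i, s)" by (cases b)
  have g1: "good p (u @ [(i,s)])" using good_prefix[of p "u @ [(i,s)]" w] Cons(2) b by simp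
  then have i: "i < p" and c: "u \<noteq> [] \<longrightarrow> \<not> (i = 0 \<and> s = (\<not> snd (last u)))"
    using good_snoc[of p u "(i,s)"] by auto
  have m: "int i mod int p = int i" using i by simp
  have d: "int i div int p = 0" using i by simp
  have st: "step p (u, int i) (GT, s) = (u @ [(i, s)], 0)"
    using m d c by auto
  have "foldl (step p) (u, 0) (block_word (b # w)) = foldl (step p) (u @ [(i,s)], 0) (block_word w)"
    unfolding b bw_Cons foldl_append fold_A add_0_left foldl_Cons st by simp
  also have "\<dots> = (u @ b # w, 0)" using Cons(1)[of "u @ [(i,s)]"] Cons(2,3) b by simp
  finally show ?case .
qed

lemma nf_of_rep: "good p w \<Longrightarrow> p \<ge> 1 \<Longrightarrow> nf p (rep (w, N)) = (w, N)"
proof -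
  assume g: "good p w" and p: "p \<ge> 1"
  have 1: "foldl (step p) ([], 0) (block_word w) = (w, 0)" using fold_bw[of p "[]" w] g p by simp
  show ?thesis
  proof (cases "N \<ge> 0")
    case True
    then have "a_pow N = replicate (nat N) A" by (simp add: a_pow_def)
    then show ?thesis unfolding nf_def rep_def using 1 True by (simp add: fold_A)
  next
    case False
    then have "a_pow N = replicate (nat (- N)) Ai" by (simp add: a_pow_def)
    then show ?thesis unfolding nf_def rep_def using 1 False by (simp add: fold_Ai)
  qed
qed

definition szi :: "(nat \<times> bool) list \<times> int \<Rightarrow> int" where
  "szi S = int (length (block_word (fst S))) + \<bar>snd S\<bar>"

lemma len_bw_snoc: "length (block_word (w @ [(i,s)])) = length (block_word w) + i + 1"
  by simp

lemma step_size: "p \<ge> 1 \<Longrightarrow> szi (step p S l) \<le> szi S + 2 * int p"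
proof -
  assume p: "p \<ge> 1"
  obtain w N where S: "S = (w, N)" by (cases S)
  obtain g b where l: "l = (g, b)" by (cases l)
  show ?thesis
  proof (cases g)
    case GA then show ?thesis using S l p by (cases b) (auto simp: szi_def)
  next
    case GT
    define r where "r = N mod int p"
    define q where "q = N div int p"
    have Nqr: "N = r + q * int p" unfolding r_def q_def by simp
    have r0: "r \<ge> 0" "r < int p" using p unfolding r_def by simp_all
    show ?thesis
    proof (cases "r = 0 \<and> w \<noteq> [] \<and> snd (last w) = (\<not> b)")
      case True
      obtain w' j where w: "w = w' @ [(j, \<not> b)]"
        using True split_last[of w "\<not> b"] by blast
      have st: "step p S l = (w', int j + N)" using True S l GT unfolding r_def w by simp
      show ?thesis using st p by (simp add: szi_def S w)
    next
      case False
      have st: "step p S l = (w @ [(nat r, b)], q * int p)" using False S l GT unfolding r_def q_def by auto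
      have "szi (step p S l) = int (length (block_word w)) + int (nat r) + 1 + \<bar>q * int p\<bar>"
        using st by (simp add: szi_def)
      moreover have "szi S = int (length (block_word w)) + \<bar>N\<bar>" using S by (simp add: szi_def)
      moreover have "\<bar>q * int p\<bar> \<le> \<bar>N\<bar> + r" using Nqr r0 by simp
      ultimately show ?thesis using r0 by simp
    qed
  qed
qed

lemma fold_size: "p \<ge> 1 \<Longrightarrow> szi (foldl (step p) S u) \<le> szi S + 2 * int p * int (length u)"
proof (induction u arbitrary: S)
  case Nil then show ?case by simp
next
  case (Cons l u)
  have "szi (foldl (step p) S (l # u)) \<le> szi (step p S l) + 2 * int p * int (length u)"
    using Cons by simp
  also have "\<dots> \<le> szi S + 2 * int p + 2 * int p * int (length u)" using step_size[OF Cons(2)] by simp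
  finally show ?case by (simp add: algebra_simps)
qed

lemma fr_Cons: "freely_reduced (x # xs) \<longleftrightarrow> (xs = [] \<or> hd xs \<noteq> inv_letter x) \<and> freely_reduced xs"
proof
  assume a: "freely_reduced (x # xs)"
  have "xs = [] \<or> hd xs \<noteq> inv_letter x"
  proof (cases xs)
    case (Cons y ys) then show ?thesis using a[unfolded freely_reduced_def, rule_format, of 0] by simp
  qed simp
  moreover have "freely_reduced xs" unfolding freely_reduced_def
  proof (intro allI impI)
    fix i assume "Suc i < length xs"
    then show "xs ! Suc i \<noteq> inv_letter (xs ! i)"
      using a[unfolded freely_reduced_def, rule_format, of "Suc i"] by simp
  qed
  ultimately show "(xs = [] \<or> hd xs \<noteq> inv_letter x) \<and> freely_reduced xs" by blast
next
  assume a: "(xs = [] \<or> hd xs \<noteq> inv_letter x) \<and> freely_reduced xs"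
  show "freely_reduced (x # xs)" unfolding freely_reduced_def
  proof (intro allI impI)
    fix i assume i: "Suc i < length (x # xs)"
    show "(x # xs) ! Suc i \<noteq> inv_letter ((x # xs) ! i)"
    proof (cases i)
      case 0 then show ?thesis using a i by (cases xs) auto
    next
      case (Suc k) then show ?thesis using a i unfolding freely_reduced_def by simp
    qed
  qed
qed

lemma fr_rep: "freely_reduced (replicate i A @ y # ys) \<longleftrightarrow> (i > 0 \<longrightarrow> y \<noteq> Ai) \<and> freely_reduced (y # ys)"
proof (induction i)
  case 0 then show ?case by simp
next
  case (Suc i)
  have "freely_reduced (replicate (Suc i) A @ y # ys) \<longleftrightarrow>
     hd (replicate i A @ y # ys) \<noteq> Ai \<and> freely_reduced (replicate i A @ y # ys)"
    using fr_Cons[of A "replicate i A @ y # ys"] by (simp add: inv_letter_def)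
  then show ?case using Suc by (cases i) auto
qed

lemma normal_good: "((\<forall>(i, s) \<in> set w. i < p) \<and> freely_reduced (block_word w)) \<longleftrightarrow> good p w"
proof (induction w)
  case Nil then show ?case by (simp add: freely_reduced_def)
next
  case (Cons b w)
  obtain i s where b: "b = (i, s)" by (cases b)
  have fr: "freely_reduced (block_word (b # w)) \<longleftrightarrow>
     (block_word w = [] \<or> hd (block_word w) \<noteq> (GT, \<not> s)) \<and> freely_reduced (block_word w)"
    unfolding b bw_Cons fr_rep fr_Cons by (simp add: inv_letter_def)
  show ?case
  proof (cases w)
    case Nil then show ?thesis using fr b by (simp add: freely_reduced_def)
  next
    case (Cons c w'')
    obtain j s' where c: "c = (j, s')" by (cases c)
    have hd: "hd (block_word w) = (if j = 0 then (GT, s') else A)" unfolding Cons c by (cases j) auto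
    have ne: "block_word w \<noteq> []" unfolding Cons c by simp
    show ?thesis using Cons.IH fr hd ne b c Cons by auto
  qed
qed

lemma normal_iff: "normal_word p w \<longleftrightarrow> good p w"
  unfolding normal_word_def using normal_good by blast


lemma nf_eq: "p \<ge> 1 \<Longrightarrow> bs_eq p u v \<Longrightarrow> nf p u = nf p v"
  unfolding nf_def by (rule nf_invariant) simp_all

lemma key: "p \<ge> 1 \<Longrightarrow> normal_word p w \<Longrightarrow> bs_eq p x (block_word w @ a_pow N) \<Longrightarrow> nf p x = (w, N)"
proof -
  assume assms: "p \<ge> 1" and that: "normal_word p w" "bs_eq p x (block_word w @ a_pow N)"
  have "nf p x = nf p (rep (w, N))" using nf_eq[OF assms] that(2) by (simp add: rep_def)
  also have "\<dots> = (w, N)" using nf_of_rep that(1) assms normal_iff by blast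
  finally show ?thesis .
qed

theorem lemma3p3:
  fixes p :: nat
  assumes "p \<ge> 1"
  shows "(\<forall>x :: letter list. \<exists>!(w, N). normal_word p w \<and> bs_eq p x (block_word w @ a_pow N))
    \<and> (\<exists>C1 :: real. C1 > 0 \<and>
        (\<forall>x w N. normal_word p w \<and> bs_eq p x (block_word w @ a_pow N) \<longrightarrow>
           C1 * (real (length (block_word w)) + real_of_int \<bar>N\<bar>) \<le> real (word_length p x)
         \<and> real (word_length p x) \<le> real (length (block_word w)) + real_of_int \<bar>N\<bar>))"
proof
  show "\<forall>x :: letter list. \<exists>!(w, N). normal_word p w \<and> bs_eq p x (block_word w @ a_pow N)"
  proof
    fix x :: "letter list"
    obtain w0 N0 where n0: "nf p x = (w0, N0)" by (cases "nf p x")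
    have g0: "good p w0" using fold_good[of p "([], 0)" x] assms n0 by (simp add: nf_def)
    have e0: "bs_eq p x (block_word w0 @ a_pow N0)" using nf_rep[OF assms, of x] n0 by (simp add: rep_def)
    show "\<exists>!(w, N). normal_word p w \<and> bs_eq p x (block_word w @ a_pow N)"
    proof (rule ex1I[of _ "(w0, N0)"])
      show "case (w0, N0) of (w, N) \<Rightarrow> normal_word p w \<and> bs_eq p x (block_word w @ a_pow N)"
        using g0 e0 normal_iff by simp
    next
      fix y assume "case y of (w, N) \<Rightarrow> normal_word p w \<and> bs_eq p x (block_word w @ a_pow N)"
      then show "y = (w0, N0)" using key[OF assms] n0 by (cases y) auto
    qed
  qed
next
  show "\<exists>C1 :: real. C1 > 0 \<and>
        (\<forall>x w N. normal_word p w \<and> bs_eq p x (block_word w @ a_pow N) \<longrightarrow>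
           C1 * (real (length (block_word w)) + real_of_int \<bar>N\<bar>) \<le> real (word_length p x)
         \<and> real (word_length p x) \<le> real (length (block_word w)) + real_of_int \<bar>N\<bar>)"
  proof (rule exI[of _ "1 / (2 * real p)"], intro conjI allI impI)
    show "0 < 1 / (2 * real p)" using assms by simp
  next
    fix x w N assume a: "normal_word p w \<and> bs_eq p x (block_word w @ a_pow N)"
    have ex: "\<exists>n v. length v = n \<and> bs_eq p x v" using bs_refl by blast
    obtain v where v: "length v = word_length p x" "bs_eq p x v"
      using LeastI_ex[of "\<lambda>n. \<exists>v. length v = n \<and> bs_eq p x v", OF ex]
      unfolding word_length_def by blast
    have "nf p v = (w, N)" using key[OF assms, of w x N] a nf_eq[OF assms v(2)] by simp
    then have "szi (w, N) \<le> szi ([], 0) + 2 * int p * int (length v)"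
      using fold_size[OF assms, of "([], 0)" v] by (simp add: nf_def)
    then have "int (length (block_word w)) + \<bar>N\<bar> \<le> 2 * int p * int (word_length p x)"
      using v(1) by (simp add: szi_def)
    then have "real (length (block_word w)) + real_of_int \<bar>N\<bar> \<le> 2 * real p * real (word_length p x)"
      by (metis (mono_tags) of_int_le_iff of_int_add of_int_mult of_int_of_nat_eq of_int_numeral)
    then show "1 / (2 * real p) * (real (length (block_word w)) + real_of_int \<bar>N\<bar>) \<le> real (word_length p x)"
      using assms by (simp add: field_simps)
  next
    fix x w N assume a: "normal_word p w \<and> bs_eq p x (block_word w @ a_pow N)"
    have "word_length p x \<le> length (block_word w @ a_pow N)"
      unfolding word_length_def using a by (intro Least_le) blast
    then show "real (word_length p x) \<le> real (length (block_word w)) + real_of_int \<bar>N\<bar>"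
      by simp
  qed
qed


end
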